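(* For any subset $A\subset E$ and any edge $k\in E$, (i) $D_kB_A^c=\sqrt{pq}\,\mathbf 1\{k\in A\}\,B_{A\setminus\{k\}}$; (ii) $-D_kL^{-1}B_A^c=\sqrt{pq}\,\mathbf 1\{k\in A\}\sum_{\{k\}\subset\alpha\subset A}\dfrac{p^{|A|-|\alpha|}}{|A|\binom{|A|-1}{|\alpha|-1}}B_{\alpha\setminus\{k\}}$. In particular, all these expressions are non-negative.
   Context: $E$ is the (finite) set of all $\binom n2$ possible edges on $n$ vertices, $p\in(0,1)$, $q=1-p$. $(X_k)_{k\in E}$ are independent Rademacher variables with $\mathbb{P}(X_k=1)=p$. $B_k=\frac12(X_k+1)$, $Y_k=(pq)^{-1/2}(B_k-p)$; for $A\subset E$, $B_A=\prod_{k\in A}B_k$, $Y_A=\prod_{k\in A}Y_k$ ($B_\emptyset=Y_\emptyset=1$), and $Z^c:=Z-\mathbb{E}[Z]$. The discrete gradient is $D_kF=\sqrt{pq}(F_k^+-F_k^-)$, where $F_k^\pm$ is $F$ with $X_k$ set to $\pm1$. Every functional $F$ of $(X_k)$ can be written $F=\mathbb{E}F+\sum_{\emptyset\ne\alpha\subset E}c_\alpha Y_\alpha$, and the pseudo-inverse Ornstein–Uhlenbeck operator is $L^{-1}F=-\sum_{\emptyset\neq\alpha\subset E}\frac{c_\alpha}{|\alpha|}Y_\alpha$. *)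

theory Defs
  imports Complex_Main
begin

text \<open>A configuration
  of the Rademacher family (X_k) is encoded by the set S \<subseteq> E of edges k
  with X_k = 1.  A functional F of (X_k) is a map on configurations
  (only its values on subsets of E are relevant).\<close>

definition edges :: "nat \<Rightarrow> nat set set" where
  "edges n = {e. e \<subseteq> {..<n} \<and> card e = 2}"

type_synonym functional = "nat set set \<Rightarrow> real"

definition Xv :: "nat set \<Rightarrow> functional" where
  "Xv k S = (if k \<in> S then 1 else -1)"

definition Bk :: "nat set \<Rightarrow> functional" where
  "Bk k S = (Xv k S + 1) / 2"

definition Yk :: "real \<Rightarrow> nat set \<Rightarrow> functional" where
  "Yk p k S = (Bk k S - p) / sqrt (p * (1 - p))"

definition BA :: "nat set set \<Rightarrow> functional" where
  "BA A S = (\<Prod>k\<in>A. Bk k S)"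

definition YA :: "real \<Rightarrow> nat set set \<Rightarrow> functional" where
  "YA p A S = (\<Prod>k\<in>A. Yk p k S)"

definition weight :: "nat \<Rightarrow> real \<Rightarrow> nat set set \<Rightarrow> real" where
  "weight n p S = (\<Prod>k\<in>edges n. if k \<in> S then p else 1 - p)"

definition expect :: "nat \<Rightarrow> real \<Rightarrow> functional \<Rightarrow> real" where
  "expect n p F = (\<Sum>S\<in>Pow (edges n). weight n p S * F S)"

definition centered :: "nat \<Rightarrow> real \<Rightarrow> functional \<Rightarrow> functional" where
  "centered n p F S = F S - expect n p F"

text \<open>Discrete gradient: F_k^+ sets X_k = 1, F_k^- sets X_k = -1.\<close>
definition Dgrad :: "real \<Rightarrow> nat set \<Rightarrow> functional \<Rightarrow> functional" where
  "Dgrad p k F S = sqrt (p * (1 - p)) * (F (insert k S) - F (S - {k}))"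

text \<open>Chaos (Walsh) coefficient c_alpha of F in F = E F + sum c_alpha Y_alpha;
  since (Y_alpha) is orthonormal in L^2, c_alpha = E[F Y_alpha].\<close>
definition chaos_coeff :: "nat \<Rightarrow> real \<Rightarrow> functional \<Rightarrow> nat set set \<Rightarrow> real" where
  "chaos_coeff n p F \<alpha> = expect n p (\<lambda>S. F S * YA p \<alpha> S)"

definition Linv :: "nat \<Rightarrow> real \<Rightarrow> functional \<Rightarrow> functional" where
  "Linv n p F S = - (\<Sum>\<alpha>\<in>Pow (edges n) - {{}}. chaos_coeff n p F \<alpha> / real (card \<alpha>) * YA p \<alpha> S)"

end

theory Submission
  imports Defs
begin


lemma finite_edges: "finite (edges n)"
  unfolding edges_def by (rule finite_subset[of _ "Pow {..<n}"]) auto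

lemma sum_Pow_prod:
  fixes h :: "'a \<Rightarrow> bool \<Rightarrow> real"
  assumes "finite E"
  shows "(\<Sum>S\<in>Pow E. \<Prod>k\<in>E. h k (k \<in> S)) = (\<Prod>k\<in>E. h k True + h k False)"
proof -
  have "(\<Prod>k\<in>E. h k True + h k False) = (\<Sum>X\<in>Pow E. (\<Prod>k\<in>X. h k True) * (\<Prod>k\<in>E-X. h k False))"
    by (rule prod_add[OF assms])
  also have "\<dots> = (\<Sum>S\<in>Pow E. \<Prod>k\<in>E. h k (k \<in> S))"
  proof (rule sum.cong[OF refl])
    fix X assume X: "X \<in> Pow E"
    have "(\<Prod>k\<in>E. h k (k \<in> X)) = (\<Prod>k\<in>E \<inter> X. h k (k \<in> X)) * (\<Prod>k\<in>E - X. h k (k \<in> X))"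
      by (rule prod.Int_Diff[OF assms])
    also have "E \<inter> X = X" using X by auto
    finally have e: "(\<Prod>k\<in>E. h k (k \<in> X)) = (\<Prod>k\<in>X. h k (k \<in> X)) * (\<Prod>k\<in>E - X. h k (k \<in> X))" .
    have 1: "(\<Prod>k\<in>X. h k (k \<in> X)) = (\<Prod>k\<in>X. h k True)" by (rule prod.cong) auto
    have 2: "(\<Prod>k\<in>E-X. h k (k \<in> X)) = (\<Prod>k\<in>E-X. h k False)" by (rule prod.cong) auto
    show "(\<Prod>k\<in>X. h k True) * (\<Prod>k\<in>E-X. h k False) = (\<Prod>k\<in>E. h k (k \<in> X))"
      using e 1 2 by simp
  qed
  finally show ?thesis ..
qed

lemma expect_prod:
  "expect n p (\<lambda>S. \<Prod>k\<in>edges n. g k (k \<in> S))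
     = (\<Prod>k\<in>edges n. p * g k True + (1 - p) * g k False)"
proof -
  have "expect n p (\<lambda>S. \<Prod>k\<in>edges n. g k (k \<in> S))
     = (\<Sum>S\<in>Pow (edges n). \<Prod>k\<in>edges n. (\<lambda>k b. (if b then p else 1 - p) * g k b) k (k \<in> S))"
    unfolding expect_def weight_def
  proof (rule sum.cong[OF refl])
    fix S
    show "(\<Prod>k\<in>edges n. if k \<in> S then p else 1 - p) * (\<Prod>k\<in>edges n. g k (k \<in> S)) =
         (\<Prod>k\<in>edges n. (\<lambda>k b. (if b then p else 1 - p) * g k b) k (k \<in> S))"
      by (simp only: prod.distrib[symmetric])
  qed
  also have "\<dots> = (\<Prod>k\<in>edges n. p * g k True + (1 - p) * g k False)"
    by (subst sum_Pow_prod[OF finite_edges]) simp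
  finally show ?thesis .
qed

lemma expect_sum: "finite I \<Longrightarrow> expect n p (\<lambda>S. \<Sum>i\<in>I. F i S) = (\<Sum>i\<in>I. expect n p (F i))"
  unfolding expect_def by (simp add: sum_distrib_left sum.swap[of _ I])

lemma expect_cmult: "expect n p (\<lambda>S. c * F S) = c * expect n p F"
  unfolding expect_def by (simp add: sum_distrib_left mult_ac)

lemma expect_diff: "expect n p (\<lambda>S. F S - G S) = expect n p F - expect n p G"
  unfolding expect_def by (simp add: sum_subtractf right_diff_distrib)

lemma expect_cong: "(\<And>S. S \<subseteq> edges n \<Longrightarrow> F S = G S) \<Longrightarrow> expect n p F = expect n p G"
  unfolding expect_def by (auto intro!: sum.cong)



lemma sum_Pow_insert:
  fixes f :: "'a set \<Rightarrow> real"
  assumes "finite B" "b \<notin> B"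
  shows "(\<Sum>e\<in>Pow (insert b B). f e) = (\<Sum>e\<in>Pow B. f e) + (\<Sum>e\<in>Pow B. f (insert b e))"
proof -
  have "(\<Sum>e\<in>Pow (insert b B). f e) = (\<Sum>e\<in>Pow B. f e) + (\<Sum>e\<in>insert b ` Pow B. f e)"
    unfolding Pow_insert by (rule sum.union_disjoint) (use assms in auto)
  also have "(\<Sum>e\<in>insert b ` Pow B. f e) = (\<Sum>e\<in>Pow B. f (insert b e))"
    by (rule sum.reindex_cong[of "insert b"]) (use assms in \<open>auto simp: inj_on_def\<close>)
  finally show ?thesis .
qed

lemma G_lemma:
  assumes "finite B"
  shows "(\<Sum>e\<in>Pow B. (-1) ^ card e / real (g + card e + 1))
          = fact g * fact (card B) / fact (g + card B + 1)"
  using assms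
proof (induction B arbitrary: g rule: finite_induct)
  case empty
  have "(fact (Suc g) :: real) = real (Suc g) * fact g" by simp
  moreover have "(fact g :: real) > 0" by simp
  ultimately show ?case by (simp del: fact_Suc add: divide_simps)
next
  case (insert b B)
  have fin: "\<And>e. e \<in> Pow B \<Longrightarrow> finite e" using insert.hyps(1) finite_subset by auto
  have "(\<Sum>e\<in>Pow (insert b B). (-1) ^ card e / real (g + card e + 1))
      = (\<Sum>e\<in>Pow B. (-1) ^ card e / real (g + card e + 1))
        + (\<Sum>e\<in>Pow B. (-1) ^ card (insert b e) / real (g + card (insert b e) + 1))"
    by (rule sum_Pow_insert[OF insert.hyps])
  also have "(\<Sum>e\<in>Pow B. (-1) ^ card (insert b e) / real (g + card (insert b e) + 1))
     = - (\<Sum>e\<in>Pow B. (-1) ^ card e / real (Suc g + card e + 1))"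
    unfolding sum_negf[symmetric]
  proof (rule sum.cong[OF refl])
    fix e assume e: "e \<in> Pow B"
    then have "b \<notin> e" using insert.hyps by auto
    then have "card (insert b e) = Suc (card e)" using fin[OF e] by simp
    then show "(-1) ^ card (insert b e) / real (g + card (insert b e) + 1) = - ((-1) ^ card e / real (Suc g + card e + 1))"
      by simp
  qed
  also have "card (insert b B) = Suc (card B)" using insert.hyps by simp
  moreover have "fact g * fact (card B) / fact (g + card B + 1) - fact (Suc g) * fact (card B) / fact (Suc g + card B + 1)
      = (fact g * fact (Suc (card B)) / fact (g + Suc (card B) + 1) :: real)"
  proof -
    have a: "(fact (Suc g + card B + 1) :: real) = real (g + card B + 2) * fact (g + card B + 1)"
      by (simp add: algebra_simps)
    have b: "(fact (g + Suc (card B) + 1) :: real) = real (g + card B + 2) * fact (g + card B + 1)"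
      by (simp add: algebra_simps)
    have c: "(fact (Suc g) :: real) = real (Suc g) * fact g" by simp
    have d: "(fact (Suc (card B)) :: real) = real (Suc (card B)) * fact (card B)" by simp
    have pos: "(fact (g + card B + 1) :: real) > 0" by simp
    have gen: "\<And>x y F :: real. F > 0 \<Longrightarrow> x * y / F - (real (Suc g) * x) * y / (real (g + card B + 2) * F)
          = x * (real (Suc (card B)) * y) / (real (g + card B + 2) * F)"
    proof -
      fix x y F :: real assume F: "F > 0"
      have "real (g + card B + 2) > 0" by simp
      then show "x * y / F - (real (Suc g) * x) * y / (real (g + card B + 2) * F)
          = x * (real (Suc (card B)) * y) / (real (g + card B + 2) * F)"
        using F by (simp add: divide_simps) (simp add: algebra_simps)
    qed
    show ?thesis unfolding a b c d using gen[OF pos] by simp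
  qed
  ultimately show ?case by (simp only: insert.IH)
qed

lemma inner_lemma:
  fixes A' d :: "'a set"
  assumes fin: "finite A'" and d: "d \<subseteq> A'"
  shows "(\<Sum>c\<in>{c. c \<in> Pow A' \<and> d \<subseteq> c}. (-1) ^ (card c - card d) / real (card c + 1))
        = fact (card d) * fact (card A' - card d) / fact (card A' + 1)"
proof -
  have fd: "finite d" using fin d finite_subset by auto
  have "(\<Sum>c\<in>{c. c \<in> Pow A' \<and> d \<subseteq> c}. (-1) ^ (card c - card d) / real (card c + 1))
      = (\<Sum>e\<in>Pow (A' - d). (-1) ^ (card (d \<union> e) - card d) / real (card (d \<union> e) + 1))"
  proof (rule sum.reindex_cong[of "\<lambda>e. d \<union> e"])
    show "inj_on (\<lambda>e. d \<union> e) (Pow (A' - d))" by (auto simp: inj_on_def)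
    show "{c. c \<in> Pow A' \<and> d \<subseteq> c} = (\<lambda>e. d \<union> e) ` Pow (A' - d)"
    proof
      show "{c. c \<in> Pow A' \<and> d \<subseteq> c} \<subseteq> (\<lambda>e. d \<union> e) ` Pow (A' - d)"
      proof
        fix c assume "c \<in> {c. c \<in> Pow A' \<and> d \<subseteq> c}"
        then have "c = d \<union> (c - d)" "c - d \<in> Pow (A' - d)" by auto
        then show "c \<in> (\<lambda>e. d \<union> e) ` Pow (A' - d)" by blast
      qed
      show "(\<lambda>e. d \<union> e) ` Pow (A' - d) \<subseteq> {c. c \<in> Pow A' \<and> d \<subseteq> c}" using d by auto
    qed
  qed simp
  also have "\<dots> = (\<Sum>e\<in>Pow (A' - d). (-1) ^ card e / real (card d + card e + 1))"
  proof (rule sum.cong[OF refl])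
    fix e assume e: "e \<in> Pow (A' - d)"
    then have fe: "finite e" using fin finite_subset by (metis PowD finite_Diff)
    have "card (d \<union> e) = card d + card e"
      by (rule card_Un_disjoint) (use e fd fe in auto)
    then show "(-1) ^ (card (d \<union> e) - card d) / real (card (d \<union> e) + 1) = (-1) ^ card e / real (card d + card e + 1)"
      by simp
  qed
  also have "\<dots> = fact (card d) * fact (card (A' - d)) / fact (card d + card (A' - d) + 1)"
    by (rule G_lemma) (use fin in simp)
  also have "card (A' - d) = card A' - card d" using card_Diff_subset[OF fd d] .
  also have "card d + (card A' - card d) = card A'" using card_mono[OF fin d] by simp
  finally show ?thesis .
qed

lemma comb_identity:
  fixes x :: "'a \<Rightarrow> real" and A' :: "'a set" and p :: real
  assumes fin: "finite A'"
  shows "(\<Sum>c\<in>Pow A'. p ^ (card A' - card c) / real (card c + 1) * (\<Prod>j\<in>c. x j - p))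
       = (\<Sum>c\<in>Pow A'. p ^ (card A' - card c) / (real (card A' + 1) * real (card A' choose card c)) * (\<Prod>j\<in>c. x j))"
proof -
  define m where "m = card A'"
  have fc: "\<And>c. c \<in> Pow A' \<Longrightarrow> finite c" using fin finite_subset by auto
  have "(\<Sum>c\<in>Pow A'. p ^ (m - card c) / real (card c + 1) * (\<Prod>j\<in>c. x j - p))
     = (\<Sum>c\<in>Pow A'. \<Sum>d\<in>{d. d \<in> Pow A' \<and> d \<subseteq> c}.
          (-1) ^ (card c - card d) / real (card c + 1) * (p ^ (m - card d) * (\<Prod>j\<in>d. x j)))"
  proof (rule sum.cong[OF refl])
    fix c assume c: "c \<in> Pow A'"
    have S1: "{d. d \<in> Pow A' \<and> d \<subseteq> c} = Pow c" using c by auto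
    have S2: "(\<Prod>j\<in>c. x j - p) = (\<Sum>d\<in>Pow c. (-1) ^ (card c - card d) * (\<Prod>j\<in>d. x j) * (\<Prod>j\<in>c-d. p))"
      by (rule prod_diff_conv_sum'[OF fc[OF c]])
    have S3: "\<And>d. d \<in> Pow c \<Longrightarrow> p ^ (m - card c) / real (card c + 1) * ((-1) ^ (card c - card d) * (\<Prod>j\<in>d. x j) * (\<Prod>j\<in>c-d. p))
        = (-1) ^ (card c - card d) / real (card c + 1) * (p ^ (m - card d) * (\<Prod>j\<in>d. x j))"
    proof -
      fix d assume d: "d \<in> Pow c"
      have fd: "finite d" using d fc[OF c] finite_subset by auto
      have cd: "card d \<le> card c" using card_mono[OF fc[OF c]] d by auto
      have cm: "card c \<le> m" unfolding m_def using card_mono[OF fin] c by auto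
      have "(\<Prod>j\<in>c-d. p) = p ^ (card c - card d)" using card_Diff_subset[OF fd] d by simp
      moreover have "p ^ (m - card c) * p ^ (card c - card d) = p ^ (m - card d)"
        using cd cm by (simp add: power_add[symmetric])
      ultimately show "p ^ (m - card c) / real (card c + 1) * ((-1) ^ (card c - card d) * (\<Prod>j\<in>d. x j) * (\<Prod>j\<in>c-d. p))
        = (-1) ^ (card c - card d) / real (card c + 1) * (p ^ (m - card d) * (\<Prod>j\<in>d. x j))"
        by (simp add: field_simps)
    qed
    show "p ^ (m - card c) / real (card c + 1) * (\<Prod>j\<in>c. x j - p)
     = (\<Sum>d\<in>{d. d \<in> Pow A' \<and> d \<subseteq> c}.
          (-1) ^ (card c - card d) / real (card c + 1) * (p ^ (m - card d) * (\<Prod>j\<in>d. x j)))"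
      unfolding S1 S2 sum_distrib_left by (rule sum.cong[OF refl]) (rule S3)
  qed
  also have "\<dots> = (\<Sum>d\<in>Pow A'. \<Sum>c\<in>{c. c \<in> Pow A' \<and> d \<subseteq> c}.
          (-1) ^ (card c - card d) / real (card c + 1) * (p ^ (m - card d) * (\<Prod>j\<in>d. x j)))"
    by (rule sum.swap_restrict) (use fin in auto)
  also have "\<dots> = (\<Sum>d\<in>Pow A'. p ^ (m - card d) / (real (m + 1) * real (m choose card d)) * (\<Prod>j\<in>d. x j))"
  proof (rule sum.cong[OF refl])
    fix d assume d: "d \<in> Pow A'"
    have cm: "card d \<le> m" unfolding m_def using card_mono[OF fin] d by auto
    have "(\<Sum>c\<in>{c. c \<in> Pow A' \<and> d \<subseteq> c}. (-1) ^ (card c - card d) / real (card c + 1) * (p ^ (m - card d) * (\<Prod>j\<in>d. x j)))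
       = (\<Sum>c\<in>{c. c \<in> Pow A' \<and> d \<subseteq> c}. (-1) ^ (card c - card d) / real (card c + 1)) * (p ^ (m - card d) * (\<Prod>j\<in>d. x j))"
      by (simp add: sum_distrib_right)
    also have "(\<Sum>c\<in>{c. c \<in> Pow A' \<and> d \<subseteq> c}. (-1) ^ (card c - card d) / real (card c + 1))
        = fact (card d) * fact (m - card d) / fact (m + 1)"
      unfolding m_def by (rule inner_lemma) (use fin d in auto)
    also have "(fact (card d) * fact (m - card d) / fact (m + 1) :: real) = 1 / (real (m + 1) * real (m choose card d))"
    proof -
      have "real (m choose card d) = fact m / (fact (card d) * fact (m - card d))"
        by (rule binomial_fact[OF cm])
      moreover have "(fact (m + 1) :: real) = real (m + 1) * fact m" by simp
      moreover have "(fact (card d) :: real) > 0" "(fact (m - card d) :: real) > 0" "(fact m :: real) > 0" by simp_all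
      moreover have "real (m choose card d) > 0" using cm by simp
      moreover have gen: "\<And>a b C F M :: real. C > 0 \<Longrightarrow> F > 0 \<Longrightarrow> M > 0 \<Longrightarrow> C = F / (a * b) \<Longrightarrow>
          a * b / (M * F) = 1 / (M * C)"
        by (auto simp add: divide_simps split: if_splits)
      ultimately show ?thesis
        by (simp only: \<open>(fact (m + 1) :: real) = real (m + 1) * fact m\<close>)
    qed
    finally show "(\<Sum>c\<in>{c. c \<in> Pow A' \<and> d \<subseteq> c}. (-1) ^ (card c - card d) / real (card c + 1) * (p ^ (m - card d) * (\<Prod>j\<in>d. x j)))
        = p ^ (m - card d) / (real (m + 1) * real (m choose card d)) * (\<Prod>j\<in>d. x j)" by simp
  qed
  finally show ?thesis unfolding m_def .
qed



lemma s_pos: "0 < p \<Longrightarrow> p < 1 \<Longrightarrow> sqrt (p * (1 - p)) > 0"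
  by simp

lemma s_sq: "0 < p \<Longrightarrow> p < 1 \<Longrightarrow> sqrt (p * (1 - p)) * sqrt (p * (1 - p)) = p * (1 - p)"
  by simp

lemma Yk_val: "Yk p k S = (if k \<in> S then 1 - p else - p) / sqrt (p * (1 - p))"
  unfolding Yk_def Bk_def Xv_def by auto

lemma Bk_val: "Bk k S = (if k \<in> S then 1 else 0)"
  unfolding Bk_def Xv_def by auto

lemma sYk: "0 < p \<Longrightarrow> p < 1 \<Longrightarrow> sqrt (p * (1 - p)) * Yk p k S = Bk k S - p"
  unfolding Yk_def using s_pos[of p] by simp

lemma YA_ext: "finite E \<Longrightarrow> a \<subseteq> E \<Longrightarrow> YA p a S = (\<Prod>k\<in>E. if k \<in> a then Yk p k S else 1)"
  unfolding YA_def using prod.inter_restrict[of E "\<lambda>k. Yk p k S" a]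
  by (simp add: Int_absorb1)

lemma ortho:
  assumes p: "0 < p" "p < 1" and a: "a \<subseteq> edges n" and b: "b \<subseteq> edges n"
  shows "expect n p (\<lambda>S. YA p a S * YA p b S) = (if a = b then 1 else 0)"
proof -
  define s where "s = sqrt (p * (1 - p))"
  have s0: "s > 0" and ss: "s * s = p * (1 - p)" unfolding s_def using s_pos[OF p] s_sq[OF p] by auto
  define y where "y = (\<lambda>bb::bool. (if bb then 1 - p else - p) / s)"
  define g where "g = (\<lambda>k bb. (if k \<in> a then y bb else 1) * (if k \<in> b then y bb else 1))"
  have "expect n p (\<lambda>S. YA p a S * YA p b S) = expect n p (\<lambda>S. \<Prod>k\<in>edges n. g k (k \<in> S))"
  proof -
    have "\<And>S. YA p a S * YA p b S = (\<Prod>k\<in>edges n. g k (k \<in> S))"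
      unfolding YA_ext[OF finite_edges a] YA_ext[OF finite_edges b] g_def y_def Yk_val s_def
      by (simp add: prod.distrib)
    then show ?thesis by simp
  qed
  also have "\<dots> = (\<Prod>k\<in>edges n. p * g k True + (1 - p) * g k False)"
    by (rule expect_prod)
  also have "\<dots> = (\<Prod>k\<in>edges n. if (k \<in> a) = (k \<in> b) then 1 else 0)"
  proof (rule prod.cong[OF refl])
    fix k
    have 1: "p * ((1 - p) / s) + (1 - p) * (- p / s) = 0" by (simp add: field_simps)
    have 2: "p * ((1 - p) / s * ((1 - p) / s)) + (1 - p) * (- p / s * (- p / s)) = 1"
    proof -
      have "p * ((1 - p) / s * ((1 - p) / s)) + (1 - p) * (- p / s * (- p / s)) = p * (1 - p) / (s * s)"
        using s0 by (simp add: field_simps)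
      then show ?thesis using ss s0 p by simp
    qed
    show "p * g k True + (1 - p) * g k False = (if (k \<in> a) = (k \<in> b) then 1 else 0)"
      unfolding g_def y_def using 1 2 by auto
  qed
  also have "\<dots> = (if a = b then 1 else 0)"
  proof (cases "a = b")
    case True then show ?thesis by simp
  next
    case False
    then obtain k where "(k \<in> a) \<noteq> (k \<in> b)" by blast
    moreover then have "k \<in> edges n" using a b by auto
    ultimately show ?thesis using False by (intro trans[OF prod_zero]) (auto simp: finite_edges)
  qed
  finally show ?thesis .
qed

lemma BA_exp:
  assumes p: "0 < p" "p < 1" and fin: "finite A"
  shows "BA A S = (\<Sum>a\<in>Pow A. p ^ (card A - card a) * sqrt (p * (1 - p)) ^ card a * YA p a S)"
proof -
  define s where "s = sqrt (p * (1 - p))"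
  have "BA A S = (\<Prod>k\<in>A. s * Yk p k S + p)"
    unfolding BA_def s_def using sYk[OF p] by (intro prod.cong) (auto simp: algebra_simps)
  also have "\<dots> = (\<Sum>X\<in>Pow A. (\<Prod>k\<in>X. s * Yk p k S) * (\<Prod>k\<in>A-X. p))"
    by (rule prod_add[OF fin])
  also have "\<dots> = (\<Sum>a\<in>Pow A. p ^ (card A - card a) * s ^ card a * YA p a S)"
  proof (rule sum.cong[OF refl])
    fix X assume X: "X \<in> Pow A"
    then have "finite X" using fin finite_subset by auto
    then have "card (A - X) = card A - card X" using X card_Diff_subset by auto
    then show "(\<Prod>k\<in>X. s * Yk p k S) * (\<Prod>k\<in>A-X. p) = p ^ (card A - card X) * s ^ card X * YA p X S"
      unfolding YA_def by (simp add: prod.distrib)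
  qed
  finally show ?thesis unfolding s_def .
qed

lemma expect_YA0:
  assumes p: "0 < p" "p < 1" and b: "b \<subseteq> edges n" "b \<noteq> {}"
  shows "expect n p (YA p b) = 0"
proof -
  have "expect n p (YA p b) = expect n p (\<lambda>S. YA p {} S * YA p b S)"
    by (simp add: YA_def[of p "{}"])
  also have "\<dots> = 0" using ortho[OF p, of "{}" n b] b by simp
  finally show ?thesis .
qed

lemma chaos_BA:
  assumes p: "0 < p" "p < 1" and A: "A \<subseteq> edges n" and b: "b \<subseteq> edges n" "b \<noteq> {}"
  shows "chaos_coeff n p (centered n p (BA A)) b
       = (if b \<subseteq> A then p ^ (card A - card b) * sqrt (p * (1 - p)) ^ card b else 0)"
proof -
  define s where "s = sqrt (p * (1 - p))"
  define c where "c = expect n p (BA A)"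
  have finA: "finite A" using A finite_edges finite_subset by auto
  have "chaos_coeff n p (centered n p (BA A)) b = expect n p (\<lambda>S. BA A S * YA p b S - c * YA p b S)"
    unfolding chaos_coeff_def centered_def c_def by (simp add: algebra_simps)
  also have "\<dots> = expect n p (\<lambda>S. BA A S * YA p b S) - c * expect n p (YA p b)"
    by (simp add: expect_diff expect_cmult)
  also have "expect n p (YA p b) = 0" by (rule expect_YA0[OF p b])
  also have "expect n p (\<lambda>S. BA A S * YA p b S)
      = expect n p (\<lambda>S. \<Sum>a\<in>Pow A. p ^ (card A - card a) * s ^ card a * (YA p a S * YA p b S))"
    unfolding BA_exp[OF p finA] s_def by (simp add: sum_distrib_left sum_distrib_right mult_ac)
  also have "\<dots> = (\<Sum>a\<in>Pow A. p ^ (card A - card a) * s ^ card a * expect n p (\<lambda>S. YA p a S * YA p b S))"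
    by (simp add: expect_sum finA expect_cmult)
  also have "\<dots> = (\<Sum>a\<in>Pow A. p ^ (card A - card a) * s ^ card a * (if a = b then 1 else 0))"
    using ortho[OF p _ b(1)] A by (intro sum.cong) auto
  also have "\<dots> = (if b \<subseteq> A then p ^ (card A - card b) * s ^ card b else 0)"
    by (simp add: finA if_distrib[of "\<lambda>x. _ * x"] sum.delta' cong: if_cong)
  finally show ?thesis unfolding s_def by simp
qed

lemma Linv_BA:
  assumes p: "0 < p" "p < 1" and A: "A \<subseteq> edges n"
  shows "Linv n p (centered n p (BA A)) S
     = - (\<Sum>b\<in>Pow A - {{}}. p ^ (card A - card b) * sqrt (p * (1 - p)) ^ card b / real (card b) * YA p b S)"
proof -
  have "(\<Sum>b\<in>Pow (edges n) - {{}}. chaos_coeff n p (centered n p (BA A)) b / real (card b) * YA p b S)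
      = (\<Sum>b\<in>Pow (edges n) - {{}}. if b \<subseteq> A then p ^ (card A - card b) * sqrt (p * (1 - p)) ^ card b / real (card b) * YA p b S else 0)"
    using chaos_BA[OF p A] by (intro sum.cong) auto
  also have "\<dots> = (\<Sum>b\<in>{b \<in> Pow (edges n) - {{}}. b \<subseteq> A}. p ^ (card A - card b) * sqrt (p * (1 - p)) ^ card b / real (card b) * YA p b S)"
    by (rule sum.inter_filter[symmetric]) (simp add: finite_edges)
  also have "{b \<in> Pow (edges n) - {{}}. b \<subseteq> A} = Pow A - {{}}" using A by auto
  finally show ?thesis unfolding Linv_def by simp
qed

lemma YA_diff:
  assumes p: "0 < p" "p < 1" and fb: "finite b"
  shows "YA p b (insert k S) - YA p b (S - {k}) = (if k \<in> b then YA p (b - {k}) S / sqrt (p * (1 - p)) else 0)"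
proof -
  have eq: "\<And>T. (\<And>j. j \<in> b - {k} \<Longrightarrow> (j \<in> T) = (j \<in> S)) \<Longrightarrow> YA p (b - {k}) T = YA p (b - {k}) S"
    unfolding YA_def Yk_val by (intro prod.cong) auto
  show ?thesis
  proof (cases "k \<in> b")
    case True
    have r: "\<And>T. YA p b T = Yk p k T * YA p (b - {k}) T"
      unfolding YA_def using prod.remove[OF fb True] by simp
    have "YA p b (insert k S) - YA p b (S - {k}) = (Yk p k (insert k S) - Yk p k (S - {k})) * YA p (b - {k}) S"
      unfolding r using eq[of "insert k S"] eq[of "S - {k}"] by (simp add: algebra_simps)
    also have "Yk p k (insert k S) - Yk p k (S - {k}) = 1 / sqrt (p * (1 - p))"
      unfolding Yk_val by (simp add: add_divide_distrib[symmetric])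
    finally show ?thesis using True by simp
  next
    case False
    then have "YA p b (insert k S) = YA p b (S - {k})"
      unfolding YA_def Yk_val by (intro prod.cong) auto
    then show ?thesis using False by simp
  qed
qed

lemma reindex_k:
  fixes f :: "nat set set \<Rightarrow> real"
  assumes "k \<in> A" "finite A"
  shows "(\<Sum>b\<in>{b. k \<in> b \<and> b \<subseteq> A}. f b) = (\<Sum>c\<in>Pow (A - {k}). f (insert k c))"
proof (rule sum.reindex_cong[of "insert k"])
  show "inj_on (insert k) (Pow (A - {k}))" by (auto simp: inj_on_def)
  show "{b. k \<in> b \<and> b \<subseteq> A} = insert k ` Pow (A - {k})"
  proof
    show "{b. k \<in> b \<and> b \<subseteq> A} \<subseteq> insert k ` Pow (A - {k})"
    proof
      fix b assume "b \<in> {b. k \<in> b \<and> b \<subseteq> A}"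
      then have "b = insert k (b - {k})" "b - {k} \<in> Pow (A - {k})" by auto
      then show "b \<in> insert k ` Pow (A - {k})" by blast
    qed
    show "insert k ` Pow (A - {k}) \<subseteq> {b. k \<in> b \<and> b \<subseteq> A}" using assms by auto
  qed
qed simp



lemma part1:
  assumes fA: "finite A"
  shows "Dgrad p k (centered n p (BA A)) S = sqrt (p * (1 - p)) * (if k \<in> A then 1 else 0) * BA (A - {k}) S"
proof -
  have eq: "\<And>T. (\<And>j. j \<in> A - {k} \<Longrightarrow> (j \<in> T) = (j \<in> S)) \<Longrightarrow> BA (A - {k}) T = BA (A - {k}) S"
    unfolding BA_def Bk_val by (intro prod.cong) auto
  have "BA A (insert k S) - BA A (S - {k}) = (if k \<in> A then BA (A - {k}) S else 0)"
  proof (cases "k \<in> A")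
    case True
    have r: "\<And>T. BA A T = Bk k T * BA (A - {k}) T"
      unfolding BA_def using prod.remove[OF fA True] by simp
    show ?thesis unfolding r using eq[of "insert k S"] eq[of "S - {k}"] True by (simp add: Bk_val)
  next
    case False
    then have "BA A (insert k S) = BA A (S - {k})"
      unfolding BA_def Bk_val by (intro prod.cong) auto
    then show ?thesis using False by simp
  qed
  then show ?thesis unfolding Dgrad_def centered_def by simp
qed

lemma part2:
  assumes p: "0 < p" "p < 1" and A: "A \<subseteq> edges n"
  shows "- Dgrad p k (Linv n p (centered n p (BA A))) S
              = sqrt (p * (1 - p)) * (if k \<in> A then 1 else 0) *
                (\<Sum>\<alpha>\<in>{\<alpha>. k \<in> \<alpha> \<and> \<alpha> \<subseteq> A}.
                   p ^ (card A - card \<alpha>)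
                   / (real (card A) * real ((card A - 1) choose (card \<alpha> - 1)))
                   * BA (\<alpha> - {k}) S)"
proof -
  define s where "s = sqrt (p * (1 - p))"
  have s0: "s > 0" unfolding s_def using p by simp
  have finA: "finite A" using A finite_edges finite_subset by auto
  define c :: "nat set set \<Rightarrow> real" where "c = (\<lambda>b. p ^ (card A - card b) * s ^ card b / real (card b))"
  have "- Dgrad p k (Linv n p (centered n p (BA A))) S
      = s * (\<Sum>b\<in>Pow A - {{}}. c b * (YA p b (insert k S) - YA p b (S - {k})))"
  proof -
    have LB: "\<And>T. Linv n p (centered n p (BA A)) T = - (\<Sum>b\<in>Pow A - {{}}. c b * YA p b T)"
      unfolding Linv_BA[OF p A] c_def s_def by (simp add: mult_ac)
    show ?thesis unfolding Dgrad_def LB s_def[symmetric]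
      by (simp add: sum_subtractf right_diff_distrib algebra_simps)
  qed
  also have "\<dots> = (\<Sum>b\<in>Pow A - {{}}. if k \<in> b then c b * YA p (b - {k}) S else 0)"
    unfolding sum_distrib_left
  proof (rule sum.cong[OF refl])
    fix b assume "b \<in> Pow A - {{}}"
    then have "finite b" using finA finite_subset by auto
    then have "YA p b (insert k S) - YA p b (S - {k}) = (if k \<in> b then YA p (b - {k}) S / s else 0)"
      using YA_diff[OF p] s_def by simp
    then show "s * (c b * (YA p b (insert k S) - YA p b (S - {k}))) = (if k \<in> b then c b * YA p (b - {k}) S else 0)"
      using s0 by simp
  qed
  also have "\<dots> = (\<Sum>b\<in>{b \<in> Pow A - {{}}. k \<in> b}. c b * YA p (b - {k}) S)"
    by (rule sum.inter_filter[symmetric]) (simp add: finA)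
  also have "{b \<in> Pow A - {{}}. k \<in> b} = {b. k \<in> b \<and> b \<subseteq> A}" by auto
  finally have L: "- Dgrad p k (Linv n p (centered n p (BA A))) S = (\<Sum>b\<in>{b. k \<in> b \<and> b \<subseteq> A}. c b * YA p (b - {k}) S)" .
  show ?thesis
  proof (cases "k \<in> A")
    case False
    then have e: "{b. k \<in> b \<and> b \<subseteq> A} = {}" by auto
    show ?thesis unfolding L e using False by simp
  next
    case True
    define A' where "A' = A - {k}"
    define m where "m = card A'"
    have finA': "finite A'" unfolding A'_def using finA by simp
    have cA: "card A = m + 1" unfolding m_def A'_def
      using card_Suc_Diff1[OF finA True] by simp
    have kA': "k \<notin> A'" unfolding A'_def by simp
    have fc: "\<And>g. g \<in> Pow A' \<Longrightarrow> finite g \<and> k \<notin> g \<and> card g \<le> m"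
      using finA' kA' card_mono[OF finA'] finite_subset unfolding m_def by auto
    have "(\<Sum>b\<in>{b. k \<in> b \<and> b \<subseteq> A}. c b * YA p (b - {k}) S)
        = (\<Sum>g\<in>Pow A'. c (insert k g) * YA p (insert k g - {k}) S)"
      unfolding A'_def by (rule reindex_k[OF True finA])
    also have "\<dots> = s * (\<Sum>g\<in>Pow A'. p ^ (m - card g) / real (card g + 1) * (\<Prod>j\<in>g. Bk j S - p))"
      unfolding sum_distrib_left
    proof (rule sum.cong[OF refl])
      fix g assume g: "g \<in> Pow A'"
      have cg: "card (insert k g) = card g + 1" using fc[OF g] by simp
      have ig: "insert k g - {k} = g" using fc[OF g] by auto
      have "s ^ card g * YA p g S = (\<Prod>j\<in>g. Bk j S - p)"
      proof -
        have "(\<Prod>j\<in>g. Bk j S - p) = (\<Prod>j\<in>g. s * Yk p j S)" using sYk[OF p] s_def by simp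
        also have "\<dots> = s ^ card g * YA p g S" unfolding YA_def by (simp add: prod.distrib)
        finally show ?thesis by simp
      qed
      moreover have "card A - (card g + 1) = m - card g" using cA by simp
      ultimately show "c (insert k g) * YA p (insert k g - {k}) S = s * (p ^ (m - card g) / real (card g + 1) * (\<Prod>j\<in>g. Bk j S - p))"
        unfolding c_def cg ig by (simp add: mult_ac)
    qed
    also have "\<dots> = s * (\<Sum>g\<in>Pow A'. p ^ (m - card g) / (real (m + 1) * real (m choose card g)) * (\<Prod>j\<in>g. Bk j S))"
      using comb_identity[OF finA', of p "\<lambda>j. Bk j S"] unfolding m_def by simp
    also have "(\<Sum>g\<in>Pow A'. p ^ (m - card g) / (real (m + 1) * real (m choose card g)) * (\<Prod>j\<in>g. Bk j S))
        = (\<Sum>\<alpha>\<in>{\<alpha>. k \<in> \<alpha> \<and> \<alpha> \<subseteq> A}.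
                   p ^ (card A - card \<alpha>)
                   / (real (card A) * real ((card A - 1) choose (card \<alpha> - 1)))
                   * BA (\<alpha> - {k}) S)"
      unfolding A'_def reindex_k[OF True finA] unfolding A'_def[symmetric]
    proof (rule sum.cong[OF refl])
      fix g assume g: "g \<in> Pow A'"
      have cg: "card (insert k g) = card g + 1" using fc[OF g] by simp
      have ig: "insert k g - {k} = g" using fc[OF g] by auto
      show "p ^ (m - card g) / (real (m + 1) * real (m choose card g)) * (\<Prod>j\<in>g. Bk j S) =
         p ^ (card A - card (insert k g)) / (real (card A) * real ((card A - 1) choose (card (insert k g) - 1))) * BA (insert k g - {k}) S"
        unfolding cg ig cA BA_def by simp
    qed
    finally have X: "(\<Sum>b\<in>{b. k \<in> b \<and> b \<subseteq> A}. c b * YA p (b - {k}) S) = s * (\<Sum>\<alpha>\<in>{\<alpha>. k \<in> \<alpha> \<and> \<alpha> \<subseteq> A}. p ^ (card A - card \<alpha>) / (real (card A) * real ((card A - 1) choose (card \<alpha> - 1))) * BA (\<alpha> - {k}) S)" .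
    show ?thesis unfolding L s_def[symmetric] X using True by simp
  qed
qed


lemma BA_nonneg: "0 \<le> BA X S"
  unfolding BA_def Bk_val by (rule prod_nonneg) auto

theorem lemma5p1:
  fixes n :: nat and p :: real and A :: "nat set set" and k :: "nat set"
  assumes "0 < p" and "p < 1"
    and "A \<subseteq> edges n" and "k \<in> edges n"
  shows "(\<forall>S\<subseteq>edges n.
            Dgrad p k (centered n p (BA A)) S
              = sqrt (p * (1 - p)) * (if k \<in> A then 1 else 0) * BA (A - {k}) S)
       \<and> (\<forall>S\<subseteq>edges n.
            - Dgrad p k (Linv n p (centered n p (BA A))) S
              = sqrt (p * (1 - p)) * (if k \<in> A then 1 else 0) *
                (\<Sum>\<alpha>\<in>{\<alpha>. k \<in> \<alpha> \<and> \<alpha> \<subseteq> A}.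
                   p ^ (card A - card \<alpha>)
                   / (real (card A) * real ((card A - 1) choose (card \<alpha> - 1)))
                   * BA (\<alpha> - {k}) S))
       \<and> (\<forall>S\<subseteq>edges n.
            0 \<le> Dgrad p k (centered n p (BA A)) S
          \<and> 0 \<le> - Dgrad p k (Linv n p (centered n p (BA A))) S)"
proof -
  have p: "0 < p" "p < 1" using assms by auto
  have finA: "finite A" using assms(3) finite_edges finite_subset by auto
  have s: "0 \<le> sqrt (p * (1 - p))" using p by simp
  have N1: "\<And>S. 0 \<le> Dgrad p k (centered n p (BA A)) S"
    unfolding part1[OF finA] using s BA_nonneg by simp
  have N2: "0 \<le> - Dgrad p k (Linv n p (centered n p (BA A))) S" for S
  proof -
    have "0 \<le> (\<Sum>\<alpha>\<in>{\<alpha>. k \<in> \<alpha> \<and> \<alpha> \<subseteq> A}.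
                   p ^ (card A - card \<alpha>)
                   / (real (card A) * real ((card A - 1) choose (card \<alpha> - 1)))
                   * BA (\<alpha> - {k}) S)"
      using p BA_nonneg by (intro sum_nonneg mult_nonneg_nonneg divide_nonneg_nonneg) auto
    then show ?thesis unfolding part2[OF p assms(3)] using s by simp
  qed
  show ?thesis using part1[OF finA] part2[OF p assms(3)] N1 N2 by blast
qed

end
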